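(* The unary language $\mathtt{UGAUSS}=\{a^{n^2+n}\mid n\in\mathbb{N}\}$ is recognized by some real-time deterministic $2$-counter automaton (rtD2CA).
   Context: Here $\mathbb{N}=\{0,1,2,\dots\}$. A real-time deterministic $k$-counter automaton (rtD$k$CA) is a 5-tuple $(Q,\Sigma,\delta,q_0,Q_a)$ with finite state set $Q$, initial state $q_0$, accept states $Q_a\subseteq Q$, and $k$ integer counters initially $0$. The input $w$ is read as $\cent w\$$ left to right, one symbol per step. The transition function $\delta(q,\sigma,\theta)=(q',c)$, where $\theta\in\{0,\pm\}^k$ records for each counter whether it is zero or nonzero and $c\in\{-1,0,1\}^k$, means: in state $q$ reading $\sigma$ with counter status $\theta$, move the head right, go to $q'$ and add $c$ to the counters. The input is accepted iff the machine is in an accept state after scanning $\$$. *)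

theory Defs
  imports Main
begin

datatype 'a tsym = LEnd | Sym 'a | REnd

text \<open>Counter status theta is a list of length k
  whose i-th entry is True iff counter i is nonzero; the update c is a list of length k
  with entries in {-1,0,1}.\<close>
definition rtDkCA ::
  "nat \<Rightarrow> 'q set \<Rightarrow> ('q \<Rightarrow> 'a tsym \<Rightarrow> bool list \<Rightarrow> 'q \<times> int list) \<Rightarrow> 'q \<Rightarrow> 'q set \<Rightarrow> bool" where
  "rtDkCA k Q \<delta> q0 Qa \<longleftrightarrow> finite Q \<and> q0 \<in> Q \<and> Qa \<subseteq> Q \<and>
     (\<forall>q\<in>Q. \<forall>\<sigma> \<theta>. length \<theta> = k \<longrightarrow>
        fst (\<delta> q \<sigma> \<theta>) \<in> Q \<and> length (snd (\<delta> q \<sigma> \<theta>)) = k \<and>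
        set (snd (\<delta> q \<sigma> \<theta>)) \<subseteq> {-1, 0, 1})"

definition ca_step ::
  "('q \<Rightarrow> 'a tsym \<Rightarrow> bool list \<Rightarrow> 'q \<times> int list) \<Rightarrow> 'q \<times> int list \<Rightarrow> 'a tsym \<Rightarrow> 'q \<times> int list" where
  "ca_step \<delta> cfg \<sigma> =
     (let (q, cs) = cfg; (q', c) = \<delta> q \<sigma> (map (\<lambda>x. x \<noteq> 0) cs) in (q', map2 (+) cs c))"

definition ca_accepts ::
  "nat \<Rightarrow> ('q \<Rightarrow> 'a tsym \<Rightarrow> bool list \<Rightarrow> 'q \<times> int list) \<Rightarrow> 'q \<Rightarrow> 'q set \<Rightarrow> 'a list \<Rightarrow> bool" where
  "ca_accepts k \<delta> q0 Qa w \<longleftrightarrow>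
     fst (foldl (ca_step \<delta>) (q0, replicate k 0) (LEnd # map Sym w @ [REnd])) \<in> Qa"

definition ca_language ::
  "nat \<Rightarrow> ('q \<Rightarrow> 'a tsym \<Rightarrow> bool list \<Rightarrow> 'q \<times> int list) \<Rightarrow> 'q \<Rightarrow> 'q set \<Rightarrow> 'a list set" where
  "ca_language k \<delta> q0 Qa = {w. ca_accepts k \<delta> q0 Qa w}"

text \<open>Unary alphabet {a} modelled by the type unit.\<close>
definition UGAUSS :: "unit list set" where
  "UGAUSS = {replicate (n^2 + n) () | n::nat. True}"

end

theory Submission
  imports Defs
begin

definition dl :: "nat \<Rightarrow> unit tsym \<Rightarrow> bool list \<Rightarrow> nat \<times> int list" where
 "dl q \<sigma> \<theta> = (case \<sigma> of
     LEnd \<Rightarrow> if q = 0 then (1, [1, 0]) else (6, [0, 0])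
   | Sym _ \<Rightarrow> (if q = 1 then (2, [-1, 1])
       else if q = 2 then (if \<theta>!0 then (1, [0, 0]) else (3, [0, 1]))
       else if q = 3 then (4, [1, -1])
       else if q = 4 then (if \<theta>!1 then (3, [0, 0]) else (1, [1, 0]))
       else (6, [0, 0]))
   | REnd \<Rightarrow> if (q = 1 \<and> \<not> \<theta>!1) \<or> (q = 3 \<and> \<not> \<theta>!0) then (5, [0, 0]) else (6, [0, 0]))"

definition cfgf :: "nat \<Rightarrow> nat \<Rightarrow> nat \<times> int list" where
 "cfgf n j = (let i = int (j div 2);
     u = (if even j then int n + 1 - i else int n - i);
     v = (if even j then i else i + 1);
     st = (if even j then 1 else 2) + (if even n then 0 else 2::nat)
   in (st, if even n then [u, v] else [v, u]))"

lemma step: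
  assumes "j < 2*n+2"
  shows "ca_step dl (cfgf n j) (Sym ()) = (if j+1 < 2*n+2 then cfgf n (j+1) else cfgf (n+1) 0)"
proof -
  obtain i where ij: "j = 2*i \<or> j = 2*i+1" by (metis dvd_mult_div_cancel odd_two_times_div_two_succ even_iff_mod_2_eq_zero)
  show ?thesis
  proof (cases "even n")
    case True
    from ij show ?thesis
    proof
      assume j: "j = 2*i"
      then have "i \<le> n" using assms by auto
      then show ?thesis using j using True assms
        by (auto simp: ca_step_def dl_def cfgf_def Let_def; presburger)
    next
      assume j: "j = 2*i+1"
      show ?thesis
      proof (cases "i = n")
        case True
        then show ?thesis using j \<open>even n\<close> assms
          by (auto simp: ca_step_def dl_def cfgf_def Let_def; presburger)
      next
        case False
        then have "i < n" using j assms by auto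
        then show ?thesis using j \<open>even n\<close> assms
          by (auto simp: ca_step_def dl_def cfgf_def Let_def; presburger)
      qed
    qed
  next
    case False
    from ij show ?thesis
    proof
      assume j: "j = 2*i"
      then have "i \<le> n" using assms by auto
      then show ?thesis using j using False assms
        by (auto simp: ca_step_def dl_def cfgf_def Let_def; presburger)
    next
      assume j: "j = 2*i+1"
      show ?thesis
      proof (cases "i = n")
        case True
        then show ?thesis using j \<open>odd n\<close> assms
          by (auto simp: ca_step_def dl_def cfgf_def Let_def; presburger)
      next
        case False
        then have "i < n" using j assms by auto
        then show ?thesis using j \<open>odd n\<close> assms
          by (auto simp: ca_step_def dl_def cfgf_def Let_def; presburger)
      qed
    qed
  qed
qed


definition run :: "nat \<Rightarrow> nat \<times> int list" where
  "run m = foldl (ca_step dl) (ca_step dl (0, replicate 2 0) LEnd) (replicate m (Sym ()))"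

lemma run_Suc: "run (Suc m) = ca_step dl (run m) (Sym ())"
proof -
  have "replicate (Suc m) (Sym ()) = replicate m (Sym ()) @ [Sym ()]" by (induct m) auto
  then show ?thesis unfolding run_def by simp
qed

lemma run0: "run 0 = cfgf 0 0"
  by (simp add: run_def ca_step_def dl_def cfgf_def numeral_2_eq_2)

lemma run_cfg: "m = n^2+n+j \<Longrightarrow> j < 2*n+2 \<Longrightarrow> run m = cfgf n j"
proof (induction m arbitrary: n j)
  case 0
  then show ?case using run0 by simp
next
  case (Suc m)
  show ?case
  proof (cases j)
    case (Suc j')
    then have "run m = cfgf n j'" using Suc.IH Suc.prems by simp
    then show ?thesis using step[of j' n] Suc.prems \<open>j = Suc j'\<close> run_Suc by simp
  next
    case 0
    then obtain k where k: "n = Suc k" using Suc.prems by (cases n) auto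
    have "m = k^2+k+(2*k+1)" using Suc.prems 0 k by (simp add: power2_eq_square)
    then have "run m = cfgf k (2*k+1)" using Suc.IH[of k "2*k+1"] by simp
    then show ?thesis using step[of "2*k+1" k] run_Suc 0 k by simp
  qed
qed

lemma decomp: "\<exists>n j. (m::nat) = n^2+n+j \<and> j < 2*n+2"
proof (induction m)
  case 0
  then show ?case by (rule exI[of _ 0]) simp
next
  case (Suc m)
  then obtain n j where nj: "m = n^2+n+j" "j < 2*n+2" by blast
  show ?case
  proof (cases "Suc j < 2*n+2")
    case True
    then show ?thesis using nj by (intro exI[of _ n] exI[of _ "Suc j"]) simp
  next
    case False
    then have "Suc m = (n+1)^2 + (n+1) + 0" using nj by (simp add: power2_eq_square)
    then show ?thesis by (intro exI[of _ "n+1"] exI[of _ 0]) simp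
  qed
qed

lemma fin_acc: "j < 2*n+2 \<Longrightarrow> (fst (ca_step dl (cfgf n j) REnd) = 5) = (j = 0)"
  by (auto simp: ca_step_def dl_def cfgf_def Let_def; presburger)

lemma uniq: assumes "n^2+n+j = k^2+(k::nat)" "j < 2*n+2" shows "j = 0"
proof (rule ccontr)
  assume "j \<noteq> 0"
  show False
  proof (cases "k \<le> n")
    case True
    then have "k^2+k \<le> n^2+n" by (simp add: add_mono power_mono)
    then show False using assms \<open>j \<noteq> 0\<close> by simp
  next
    case False
    then have "n+1 \<le> k" by simp
    then have "(n+1)^2+(n+1) \<le> k^2+k" by (intro add_mono power_mono) auto
    then show False using assms by (simp add: power2_eq_square)
  qed
qed

lemma acc_iff: "ca_accepts 2 dl 0 {5} w \<longleftrightarrow> fst (ca_step dl (run (length w)) REnd) = 5"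
proof -
  have w: "map Sym w = replicate (length w) (Sym ())"
    by (induction w) auto
  show ?thesis unfolding ca_accepts_def run_def w by simp
qed

theorem theorem3:
  shows "\<exists>(Q :: nat set) \<delta> q0 Qa. rtDkCA 2 Q \<delta> q0 Qa \<and> ca_language 2 \<delta> q0 Qa = UGAUSS"
proof (intro exI conjI)
  show "rtDkCA 2 {0..6} dl 0 {5}"
    unfolding rtDkCA_def by (auto simp: dl_def split: tsym.splits)
  show "ca_language 2 dl 0 {5} = UGAUSS"
  proof (rule set_eqI)
    fix w :: "unit list"
    obtain n j where nj: "length w = n^2+n+j" "j < 2*n+2" using decomp by blast
    have wr: "w = replicate (length w) ()" by (induction w) auto
    have "w \<in> ca_language 2 dl 0 {5} \<longleftrightarrow> j = 0"
      using acc_iff[of w] run_cfg[OF nj] fin_acc[OF nj(2)] by (simp add: ca_language_def)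
    also have "\<dots> \<longleftrightarrow> w \<in> UGAUSS"
    proof
      assume "j = 0" then show "w \<in> UGAUSS" unfolding UGAUSS_def using nj wr by auto
    next
      assume "w \<in> UGAUSS"
      then obtain k where "w = replicate (k^2+k) ()" unfolding UGAUSS_def by auto
      then show "j = 0" using uniq[of n j k] nj by simp
    qed
    finally show "w \<in> ca_language 2 dl 0 {5} \<longleftrightarrow> w \<in> UGAUSS" .
  qed
qed

end
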